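(* Let $V$ be an $n$-dimensional complex vector space with basis $e_1,\ldots,e_n$ and dual basis $e_1^*,\ldots,e_n^*$. Let $a_{ij}=e_i\otimes e_j-e_j\otimes e_i\in\Lambda_2(V)$ and $b_{ij}=e_i^*\otimes e_j^*+e_j^*\otimes e_i^*\in S_2(V^* )$, and let $A=(a_{ij})_{1\le i,j\le n}$, $B=(b_{ij})_{1\le i,j\le n}\in\operatorname{Mat}_{n,n}(\Lambda(\Lambda_2(V)\oplus S_2(V^* )))$. Then $\operatorname{tr}((AB)^k)=0$ for every $k>0$.
   Context: $\Lambda(\Lambda_2(V)\oplus S_2(V^* ))$ is the exterior algebra on $\Lambda_2(V)\oplus S_2(V^* )$; the $a_{ij}$ and $b_{ij}$ are elements of degree one in it (so they pairwise anticommute), with $a_{ji}=-a_{ij}$ and $b_{ji}=b_{ij}$. Matrix products are taken with entries multiplied in the order written. *)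

theory Defs
  imports Complex_Main "HOL-Library.Product_Lexorder"
begin

text \<open>Exterior algebra over the complex numbers on a vector space with a basis indexed
by a linearly ordered type 'g.  An element is given by its coordinates with respect to
the basis of wedge monomials g_1 ^ ... ^ g_r (g_1 < ... < g_r), indexed by finite sets
of generators.  Values at infinite sets are irrelevant (the product sets them to 0).\<close>

type_synonym 'g ext = "'g set \<Rightarrow> complex"

definition ext_sign :: "'g::linorder set \<Rightarrow> 'g set \<Rightarrow> complex" where
  "ext_sign T U = (-1) ^ card {(t, u). t \<in> T \<and> u \<in> U \<and> u < t}"

definition ext_zero :: "'g ext" where
  "ext_zero = (\<lambda>S. 0)"

definition ext_one :: "'g ext" where
  "ext_one = (\<lambda>S. if S = {} then 1 else 0)"

definition ext_add :: "'g ext \<Rightarrow> 'g ext \<Rightarrow> 'g ext" where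
  "ext_add x y = (\<lambda>S. x S + y S)"

definition ext_smult :: "complex \<Rightarrow> 'g ext \<Rightarrow> 'g ext" where
  "ext_smult c x = (\<lambda>S. c * x S)"

definition ext_mult :: "'g::linorder ext \<Rightarrow> 'g ext \<Rightarrow> 'g ext" where
  "ext_mult x y = (\<lambda>S. if finite S then
      (\<Sum>T\<in>Pow S. ext_sign T (S - T) * x T * y (S - T)) else 0)"

definition ext_gen :: "'g \<Rightarrow> 'g ext" where
  "ext_gen g = (\<lambda>S. if S = {g} then 1 else 0)"

text \<open>Basis of \<Lambda>_2(V) \<oplus> S_2(V^*):  (i,j,False) for i<j stands for
  e_i\<otimes>e_j - e_j\<otimes>e_i;  (i,j,True) for i<j stands for e_i^*\<otimes>e_j^* + e_j^*\<otimes>e_i^*,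
  and (i,i,True) stands for e_i^*\<otimes>e_i^*.  Indices are 0-based (i < n).\<close>
type_synonym gen = "nat \<times> nat \<times> bool"

definition a_elt :: "nat \<Rightarrow> nat \<Rightarrow> gen ext" where
  "a_elt i j = (if i < j then ext_gen (i, j, False)
                else if j < i then ext_smult (-1) (ext_gen (j, i, False))
                else ext_zero)"

definition b_elt :: "nat \<Rightarrow> nat \<Rightarrow> gen ext" where
  "b_elt i j = (if i = j then ext_smult 2 (ext_gen (i, i, True))
                else ext_gen (min i j, max i j, True))"

definition mat_mult :: "nat \<Rightarrow> (nat \<Rightarrow> nat \<Rightarrow> 'g::linorder ext) \<Rightarrow> (nat \<Rightarrow> nat \<Rightarrow> 'g ext)
    \<Rightarrow> nat \<Rightarrow> nat \<Rightarrow> 'g ext" where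
  "mat_mult n M N = (\<lambda>i j. foldr ext_add (map (\<lambda>l. ext_mult (M i l) (N l j)) [0..<n]) ext_zero)"

definition mat_id :: "nat \<Rightarrow> nat \<Rightarrow> 'g ext" where
  "mat_id = (\<lambda>i j. if i = j then ext_one else ext_zero)"

fun mat_pow :: "nat \<Rightarrow> (nat \<Rightarrow> nat \<Rightarrow> 'g::linorder ext) \<Rightarrow> nat \<Rightarrow> nat \<Rightarrow> nat \<Rightarrow> 'g ext" where
  "mat_pow n M 0 = mat_id"
| "mat_pow n M (Suc k) = mat_mult n (mat_pow n M k) M"

definition mat_trace :: "nat \<Rightarrow> (nat \<Rightarrow> nat \<Rightarrow> 'g ext) \<Rightarrow> 'g ext" where
  "mat_trace n M = foldr ext_add (map (\<lambda>i. M i i) [0..<n]) ext_zero"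

end

theory Submission
  imports Defs
begin


definition ninv :: "'g::linorder set \<Rightarrow> 'g set \<Rightarrow> nat" where
  "ninv T U = card {(t, u). t \<in> T \<and> u \<in> U \<and> u < t}"

lemma ext_sign_ninv: "ext_sign T U = (-1) ^ ninv T U"
  by (simp add: ext_sign_def ninv_def)

lemma ninv_fin: "finite A \<Longrightarrow> finite C \<Longrightarrow> finite {(t, u). t \<in> A \<and> u \<in> C \<and> u < t}"
  by (rule finite_subset[where B="A \<times> C"]) auto

lemma ninv_Un_left:
  assumes "finite A" "finite B" "finite C" "A \<inter> B = {}"
  shows "ninv (A \<union> B) C = ninv A C + ninv B C"
proof -
  have "{(t,u). t \<in> A \<union> B \<and> u \<in> C \<and> u < t} = {(t,u). t \<in> A \<and> u \<in> C \<and> u < t} \<union> {(t,u). t \<in> B \<and> u \<in> C \<and> u < t}" by auto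
  then show ?thesis unfolding ninv_def
    using assms by (simp add: card_Un_disjoint ninv_fin disjoint_iff)
qed

lemma ninv_Un_right:
  assumes "finite A" "finite B" "finite C" "B \<inter> C = {}"
  shows "ninv A (B \<union> C) = ninv A B + ninv A C"
proof -
  have "{(t,u). t \<in> A \<and> u \<in> B \<union> C \<and> u < t} = {(t,u). t \<in> A \<and> u \<in> B \<and> u < t} \<union> {(t,u). t \<in> A \<and> u \<in> C \<and> u < t}" by auto
  then show ?thesis unfolding ninv_def
    using assms by (simp add: card_Un_disjoint ninv_fin disjoint_iff)
qed

lemma ninv_swap:
  assumes "finite A" "finite B" "A \<inter> B = {}"
  shows "ninv A B + ninv B A = card A * card B"
proof -
  have e: "A \<times> B = {(t,u). t \<in> A \<and> u \<in> B \<and> u < t} \<union> prod.swap ` {(t, u). t \<in> B \<and> u \<in> A \<and> u < t}"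
    using assms(3) by (auto simp: image_iff)
  have c: "card (prod.swap ` {(t, u). t \<in> B \<and> u \<in> A \<and> u < t}) = ninv B A"
    unfolding ninv_def by (rule card_image) (simp add: inj_on_def)
  have f2: "finite (prod.swap ` {(t, u). t \<in> B \<and> u \<in> A \<and> u < t})"
    using assms by (simp add: ninv_fin)
  have "card (A \<times> B) = ninv A B + ninv B A"
    unfolding e
    apply (subst card_Un_disjoint)
    using assms ninv_fin f2 c by (auto simp: ninv_def)
  then show ?thesis by (simp add: card_cartesian_product)
qed

lemma sign_swap:
  assumes "finite A" "finite B" "A \<inter> B = {}"
  shows "ext_sign A B = (-1) ^ (card A * card B) * ext_sign B A"
proof -
  have "(-1::complex) ^ (card A * card B) * ext_sign B A = (-1)^(ninv A B + ninv B A) * (-1) ^ ninv B A"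
    using ninv_swap[OF assms] by (simp add: ext_sign_ninv)
  also have "\<dots> = (-1)^ninv A B * ((-1) ^ ninv B A * (-1) ^ ninv B A)"
    by (simp add: power_add)
  also have "\<dots> = ext_sign A B"
    by (simp add: ext_sign_ninv flip: power_add)
  finally show ?thesis ..
qed



lemma ext_mult_fin: "finite S \<Longrightarrow> ext_mult x y S = (\<Sum>T\<in>Pow S. ext_sign T (S - T) * x T * y (S - T))"
  by (simp add: ext_mult_def)

lemma ext_mult_assoc: "ext_mult (ext_mult x y) z = ext_mult x (ext_mult y z)"
proof (rule ext)
  fix S :: "'a set"
  show "ext_mult (ext_mult x y) z S = ext_mult x (ext_mult y z) S"
  proof (cases "finite S")
    case False thus ?thesis by (simp add: ext_mult_def)
  next
    case fin: True
    have "ext_mult (ext_mult x y) z S = (\<Sum>T\<in>Pow S. \<Sum>U\<in>Pow T. ext_sign T (S - T) * ext_sign U (T - U) * x U * y (T - U) * z (S - T))"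
      unfolding ext_mult_fin[OF fin]
      by (rule sum.cong[OF refl]) (simp add: ext_mult_fin finite_subset[OF _ fin] sum_distrib_left sum_distrib_right mult.assoc)
    also have "\<dots> = (\<Sum>(T,U)\<in>(SIGMA T:Pow S. Pow T). ext_sign T (S - T) * ext_sign U (T - U) * x U * y (T - U) * z (S - T))"
      by (rule sum.Sigma) (auto simp: fin finite_subset[OF _ fin])
    also have "\<dots> = (\<Sum>(U,V)\<in>(SIGMA U:Pow S. Pow (S - U)). ext_sign U (S - U) * ext_sign V (S - U - V) * x U * y V * z (S - U - V))"
    proof (rule sym, rule sum.reindex_bij_witness[where j="\<lambda>(U,V). (U \<union> V, U)" and i="\<lambda>(T,U). (U, T - U)"])
      fix a assume "a \<in> (SIGMA U:Pow S. Pow (S - U))"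
      then obtain U V where a: "a = (U,V)" "U \<subseteq> S" "V \<subseteq> S - U" by auto
      have fU: "finite U" and fV: "finite V" and fW: "finite (S - U - V)"
        using a fin by (auto intro: finite_subset[OF _ fin])
      have "ninv (U \<union> V) (S - U - V) + ninv U V = ninv U (V \<union> (S - U - V)) + ninv V (S - U - V)"
        using ninv_Un_left[OF fU fV fW] ninv_Un_right[OF fU fV fW] a by auto
      moreover have "V \<union> (S - U - V) = S - U" using a by auto
      ultimately have s: "ninv (U \<union> V) (S - U - V) + ninv U V = ninv U (S - U) + ninv V (S - U - V)" by simp
      have e1: "S - (U \<union> V) = S - U - V" by auto
      have e2: "U \<union> V - U = V" using a by auto
      show "(case (case a of (U, V) \<Rightarrow> (U \<union> V, U)) of (T, U) \<Rightarrow> ext_sign T (S - T) * ext_sign U (T - U) * x U * y (T - U) * z (S - T)) =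
        (case a of (U, V) \<Rightarrow> ext_sign U (S - U) * ext_sign V (S - U - V) * x U * y V * z (S - U - V))"
        using s unfolding a e1 e2
        by (simp add: ext_sign_ninv e1 e2 flip: power_add)
    qed auto
    also have "\<dots> = (\<Sum>U\<in>Pow S. \<Sum>V\<in>Pow (S - U). ext_sign U (S - U) * ext_sign V (S - U - V) * x U * y V * z (S - U - V))"
      by (rule sum.Sigma[symmetric]) (auto simp: fin)
    also have "\<dots> = ext_mult x (ext_mult y z) S"
      unfolding ext_mult_fin[OF fin]
      by (rule sum.cong[OF refl]) (simp add: ext_mult_fin fin sum_distrib_left sum_distrib_right mult.assoc mult.left_commute Diff_Diff_Int)
    finally show ?thesis .
  qed
qed



lemma ext_mult_distrib_left: "ext_mult x (\<lambda>S. y S + z S) = (\<lambda>S. ext_mult x y S + ext_mult x z S)"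
  by (auto simp: ext_mult_def ring_distribs sum.distrib)

lemma ext_mult_distrib_right: "ext_mult (\<lambda>S. x S + y S) z = (\<lambda>S. ext_mult x z S + ext_mult y z S)"
  by (auto simp: ext_mult_def ring_distribs sum.distrib)

lemma ext_mult_one_left: assumes h: "\<forall>S. infinite S \<longrightarrow> x S = 0" shows "ext_mult ext_one x = x"
proof (rule ext)
  fix S
  show "ext_mult ext_one x S = x S"
  proof (cases "finite S")
    case True
    have "ext_mult ext_one x S = (\<Sum>T\<in>Pow S. if T = {} then ext_sign T (S - T) * x (S - T) else 0)"
      unfolding ext_mult_fin[OF True] by (rule sum.cong) (auto simp: ext_one_def)
    also have "\<dots> = x S" using True by (simp add: sum.delta sum.delta' ext_sign_def)
    finally show ?thesis .
  qed (use h in \<open>simp add: ext_mult_def\<close>)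
qed

lemma ext_mult_one_right: assumes h: "\<forall>S. infinite S \<longrightarrow> x S = 0" shows "ext_mult x ext_one = x"
proof (rule ext)
  fix S
  show "ext_mult x ext_one S = x S"
  proof (cases "finite S")
    case True
    have "ext_mult x ext_one S = (\<Sum>T\<in>Pow S. if T = S then ext_sign T (S - T) * x T else 0)"
      unfolding ext_mult_fin[OF True] by (rule sum.cong) (auto simp: ext_one_def)
    also have "\<dots> = x S" using True by (simp add: sum.delta sum.delta' ext_sign_def)
    finally show ?thesis .
  qed (use h in \<open>simp add: ext_mult_def\<close>)
qed

definition parity :: "bool \<Rightarrow> 'g ext \<Rightarrow> bool" where
  "parity b x \<longleftrightarrow> (\<forall>S. x S \<noteq> 0 \<longrightarrow> finite S \<and> odd (card S) = b)"

lemma ext_mult_parity: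
  assumes "parity b x" "parity c y"
  shows "parity (b \<noteq> c) (ext_mult x y)"
  unfolding parity_def
proof (intro allI impI)
  fix S assume ne: "ext_mult x y S \<noteq> 0"
  then have fin: "finite S" by (auto simp: ext_mult_def split: if_splits)
  have "(\<Sum>T\<in>Pow S. ext_sign T (S - T) * x T * y (S - T)) \<noteq> 0"
    using ne unfolding ext_mult_fin[OF fin] .
  then obtain T where T: "T \<in> Pow S" "ext_sign T (S - T) * x T * y (S - T) \<noteq> 0"
    by (rule sum.not_neutral_contains_not_neutral)
  then have "x T \<noteq> 0" "y (S - T) \<noteq> 0" by auto
  with assms have p: "odd (card T) = b" "odd (card (S - T)) = c" by (auto simp: parity_def)
  have "card S = card T + card (S - T)"
    using T(1) fin by (simp add: card_Diff_subset card_mono finite_subset)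
  then show "finite S \<and> odd (card S) = (b \<noteq> c)" using p fin by auto
qed



lemma Diff_Diff_sub: "T \<subseteq> S \<Longrightarrow> S - (S - T) = T" by blast

lemma ext_mult_rev: "finite S \<Longrightarrow> ext_mult y x S = (\<Sum>T\<in>Pow S. ext_sign (S - T) T * y (S - T) * x T)"
  unfolding ext_mult_fin
  by (rule sum.reindex_bij_witness[where i="\<lambda>T. S - T" and j="\<lambda>T. S - T"]) (simp_all add: Diff_Diff_sub)

lemma ext_mult_comm:
  assumes "parity b x" "parity c y"
  shows "ext_mult x y = (\<lambda>S. (if b \<and> c then -1 else 1) * ext_mult y x S)"
proof (rule ext)
  fix S
  show "ext_mult x y S = (if b \<and> c then -1 else 1) * ext_mult y x S"
  proof (cases "finite S")
    case fin: True
    have "(if b \<and> c then -1 else 1) * ext_mult y x S = (\<Sum>T\<in>Pow S. (if b \<and> c then -1 else 1) * ext_sign (S - T) T * y (S - T) * x T)"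
      unfolding ext_mult_rev[OF fin] by (simp add: sum_distrib_left mult.assoc)
    also have "\<dots> = ext_mult x y S"
      unfolding ext_mult_fin[OF fin]
    proof (rule sum.cong[OF refl])
      fix T assume T: "T \<in> Pow S"
      show "(if b \<and> c then -1 else 1) * ext_sign (S - T) T * y (S - T) * x T = ext_sign T (S - T) * x T * y (S - T)"
      proof (cases "x T = 0 \<or> y (S - T) = 0")
        case False
        with assms have p: "odd (card T) = b" "odd (card (S - T)) = c" unfolding parity_def by blast+
        have fT: "finite T" using T fin by (auto intro: finite_subset)
        have "ext_sign T (S - T) = (-1) ^ (card T * card (S - T)) * ext_sign (S - T) T"
          using fT fin by (intro sign_swap) auto
        moreover have "even (card T * card (S - T)) \<longleftrightarrow> \<not> (b \<and> c)" using p by auto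
        then have "(-1::complex) ^ (card T * card (S - T)) = (if b \<and> c then -1 else 1)"
          unfolding minus_one_power_iff by simp
        ultimately show ?thesis by (simp add: mult_ac)
      next
        case True then show ?thesis by auto
      qed
    qed
    finally show ?thesis ..
  qed (simp add: ext_mult_def)
qed



typedef (overloaded) 'g ea = "{x :: 'g set \<Rightarrow> complex. \<forall>S. infinite S \<longrightarrow> x S = 0}"
  by (rule exI[of _ "\<lambda>_. 0"]) simp

setup_lifting type_definition_ea

instantiation ea :: (linorder) ring_1
begin
lift_definition zero_ea :: "'a ea" is "\<lambda>_. 0" by simp
lift_definition one_ea :: "'a ea" is ext_one by (auto simp: ext_one_def)
lift_definition plus_ea :: "'a ea \<Rightarrow> 'a ea \<Rightarrow> 'a ea" is "\<lambda>x y S. x S + y S" by simp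
lift_definition uminus_ea :: "'a ea \<Rightarrow> 'a ea" is "\<lambda>x S. - x S" by simp
lift_definition minus_ea :: "'a ea \<Rightarrow> 'a ea \<Rightarrow> 'a ea" is "\<lambda>x y S. x S - y S" by simp
lift_definition times_ea :: "'a ea \<Rightarrow> 'a ea \<Rightarrow> 'a ea" is ext_mult by (simp add: ext_mult_def)
instance
proof
  fix a b c :: "'a ea"
  show "a * b * c = a * (b * c)" by transfer (rule ext_mult_assoc)
  show "(a + b) * c = a * c + b * c" by transfer (rule ext_mult_distrib_right)
  show "a * (b + c) = a * b + a * c" by transfer (rule ext_mult_distrib_left)
  show "1 * a = a" by transfer (rule ext_mult_one_left)
  show "a * 1 = a" by transfer (rule ext_mult_one_right)
  show "a + b + c = a + (b + c)" by transfer (simp add: add.assoc)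
  show "a + b = b + a" by transfer (simp add: add.commute)
  show "0 + a = a" by transfer simp
  show "- a + a = 0" by transfer simp
  show "a - b = a + - b" by transfer simp
  show "(0::'a ea) \<noteq> 1" by transfer (auto simp: ext_one_def fun_eq_iff)
qed
end

lemma ea_eq_iff: "x = y \<longleftrightarrow> Rep_ea x = Rep_ea y" by (simp add: Rep_ea_inject)

lemma ea_self_neg: "(x :: 'g::linorder ea) = - x \<Longrightarrow> x = 0"
  by transfer (auto simp: fun_eq_iff)

definition par :: "bool \<Rightarrow> 'g::linorder ea \<Rightarrow> bool" where
  "par b x \<longleftrightarrow> parity b (Rep_ea x)"

lemma par_mult: "par b x \<Longrightarrow> par c y \<Longrightarrow> par (b \<noteq> c) (x * y)"
  unfolding par_def times_ea.rep_eq by (rule ext_mult_parity)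

lemma par_comm: "par b x \<Longrightarrow> par c y \<Longrightarrow> x * y = (if b \<and> c then - (y * x) else y * x)"
  unfolding par_def ea_eq_iff times_ea.rep_eq
  by (drule (1) ext_mult_comm) (simp add: uminus_ea.rep_eq times_ea.rep_eq)

lemma par_zero: "par b 0" by (simp add: par_def parity_def zero_ea.rep_eq)
lemma par_add: "par b x \<Longrightarrow> par b y \<Longrightarrow> par b (x + y)"
  by (auto simp: par_def parity_def plus_ea.rep_eq) (metis add.right_neutral add_0)+
lemma par_neg: "par b x \<Longrightarrow> par b (- x)"
  by (auto simp: par_def parity_def uminus_ea.rep_eq)
lemma par_sum: "(\<And>i. i \<in> A \<Longrightarrow> par b (f i)) \<Longrightarrow> par b (sum f A)"
  by (induction A rule: infinite_finite_induct) (auto simp: par_zero par_add)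



definition mm :: "nat \<Rightarrow> (nat \<Rightarrow> nat \<Rightarrow> 'a::ring_1) \<Rightarrow> (nat \<Rightarrow> nat \<Rightarrow> 'a) \<Rightarrow> nat \<Rightarrow> nat \<Rightarrow> 'a" where
  "mm n X Y = (\<lambda>i j. \<Sum>l<n. X i l * Y l j)"

lemma mm_assoc: "mm n (mm n X Y) Z = mm n X (mm n Y Z)"
  unfolding mm_def
  by (auto simp: fun_eq_iff sum_distrib_left sum_distrib_right mult.assoc intro: sum.swap)

fun mp :: "nat \<Rightarrow> (nat \<Rightarrow> nat \<Rightarrow> 'a::ring_1) \<Rightarrow> nat \<Rightarrow> nat \<Rightarrow> nat \<Rightarrow> 'a" where
  "mp n X 0 = (\<lambda>i j. if i = j then 1 else 0)"
| "mp n X (Suc k) = mm n (mp n X k) X"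

fun q :: "nat \<Rightarrow> (nat \<Rightarrow> nat \<Rightarrow> 'a::ring_1) \<Rightarrow> nat \<Rightarrow> nat \<Rightarrow> nat \<Rightarrow> 'a" where
  "q n X 0 = X"
| "q n X (Suc k) = mm n (q n X k) X"

definition tr :: "nat \<Rightarrow> (nat \<Rightarrow> nat \<Rightarrow> 'a::ring_1) \<Rightarrow> 'a" where
  "tr n X = (\<Sum>i<n. X i i)"

lemma sum_delta_mult: "(\<Sum>l<(n::nat). (if i = l then 1 else 0) * f l) = (if i < n then f i else (0::'a::ring_1))"
  by (induction n) (auto simp: less_Suc_eq)

lemma par_comm_even: "par False x \<Longrightarrow> par c y \<Longrightarrow> x * y = y * x"
  using par_comm by fastforce

lemma par_comm_odd: "par True x \<Longrightarrow> par True y \<Longrightarrow> x * y = - (y * x)"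
  using par_comm by fastforce

lemma mp_q: "i < n \<Longrightarrow> mp n X (Suc m) i j = q n X m i j"
proof (induction m arbitrary: j)
  case 0 then show ?case by (simp add: mm_def sum_delta_mult)
next
  case (Suc m) then show ?case by (simp add: mm_def)
qed

lemma tr_mp_q: "tr n (mp n X (Suc m)) = tr n (q n X m)"
  unfolding tr_def by (rule sum.cong) (simp_all add: mp_q del: mp.simps)

lemma q_comm: "mm n X (q n X m) = q n X (Suc m)"
  by (induction m) (simp_all add: mm_assoc[symmetric])

definition tp :: "(nat \<Rightarrow> nat \<Rightarrow> 'a) \<Rightarrow> nat \<Rightarrow> nat \<Rightarrow> 'a" where
  "tp X = (\<lambda>i j. X j i)"

lemma tr_tp: "tr n (tp X) = tr n X" by (simp add: tr_def tp_def)

definition mpar :: "bool \<Rightarrow> (nat \<Rightarrow> nat \<Rightarrow> 'g::linorder ea) \<Rightarrow> bool" where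
  "mpar b X \<longleftrightarrow> (\<forall>i j. par b (X i j))"

lemma mpar_mm: "mpar b X \<Longrightarrow> mpar c Y \<Longrightarrow> mpar (b \<noteq> c) (mm n X Y)"
  unfolding mpar_def mm_def by (intro allI par_sum) (metis par_mult)

lemma mpar_q: "mpar False X \<Longrightarrow> mpar False (q n X m)"
  by (induction m) (auto dest: mpar_mm)

lemma tp_mm_even: "mpar False X \<Longrightarrow> mpar c Y \<Longrightarrow> tp (mm n X Y) = mm n (tp Y) (tp X)"
  unfolding tp_def mm_def mpar_def fun_eq_iff
  by (auto intro!: sum.cong) (metis par_comm_even)

lemma tp_q: "mpar False X \<Longrightarrow> tp (q n X m) = q n (tp X) m"
proof (induction m)
  case (Suc m)
  have "tp (q n X (Suc m)) = mm n (tp X) (tp (q n X m))"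
    using Suc.prems by (simp add: tp_mm_even mpar_q)
  also have "\<dots> = q n (tp X) (Suc m)" using Suc by (simp add: q_comm)
  finally show ?case .
qed simp

lemma tr_swap_odd: "mpar True X \<Longrightarrow> mpar True Y \<Longrightarrow> tr n (mm n X Y) = - tr n (mm n Y X)"
proof -
  assume X: "mpar True X" and Y: "mpar True Y"
  have "tr n (mm n Y X) = (\<Sum>i<n. \<Sum>l<n. Y i l * X l i)" by (simp add: tr_def mm_def)
  also have "\<dots> = (\<Sum>l<n. \<Sum>i<n. Y i l * X l i)" by (rule sum.swap)
  also have "\<dots> = (\<Sum>l<n. \<Sum>i<n. - (X l i * Y i l))"
    using X Y unfolding mpar_def by (auto intro!: sum.cong) (metis par_comm_odd)
  finally show ?thesis by (simp add: tr_def mm_def sum_negf)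
qed



lemma key:
  fixes A B :: "nat \<Rightarrow> nat \<Rightarrow> 'g::linorder ea"
  assumes pA: "mpar True A" and pB: "mpar True B"
    and tA: "\<And>i j. A j i = - A i j" and tB: "\<And>i j. B j i = B i j"
  shows "tr n (q n (mm n A B) m) = 0"
proof -
  define C where "C = mm n A B"
  define D where "D = mm n B A"
  have pC: "mpar False C" unfolding C_def using mpar_mm[OF pA pB] by simp
  have pD: "mpar False D" unfolding D_def using mpar_mm[OF pB pA] by simp
  have tC: "tp C = D"
  proof (rule ext, rule ext)
    fix i j
    have "tp C i j = (\<Sum>l<n. A j l * B l i)" by (simp add: tp_def C_def mm_def)
    also have "\<dots> = (\<Sum>l<n. B i l * A l j)"
    proof (rule sum.cong[OF refl])
      fix l
      have "A l j * B l i = - (B l i * A l j)"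
        using pA pB unfolding mpar_def by (metis par_comm_odd)
      have "A j l * B l i = (- A l j) * B l i" using tA[of l j] by simp
      also have "\<dots> = B l i * A l j" using \<open>A l j * B l i = - (B l i * A l j)\<close> by simp
      also have "\<dots> = B i l * A l j" using tB[of l i] by simp
      finally show "A j l * B l i = B i l * A l j" .
    qed
    also have "\<dots> = D i j" by (simp add: D_def mm_def)
    finally show "tp C i j = D i j" .
  qed
  have e1: "tr n (q n C m) = tr n (q n D m)"
    using tr_tp[of n "q n C m"] tp_q[OF pC, of n m] tC by simp
  have L: "mm n B (q n C m) = mm n (q n D m) B" for m
  proof (induction m)
    case 0 then show ?case by (simp add: C_def D_def mm_assoc)
  next
    case (Suc m)
    have "mm n B (q n C (Suc m)) = mm n (mm n B (q n C m)) C" by (simp add: mm_assoc)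
    also have "\<dots> = mm n (mm n (q n D m) B) (mm n A B)" using Suc by (simp add: C_def)
    also have "\<dots> = mm n (mm n (q n D m) D) B" by (simp add: D_def mm_assoc)
    finally show ?case by simp
  qed
  have e2: "tr n (q n C m) = - tr n (q n D m)"
  proof (cases m)
    case 0 then show ?thesis using tr_swap_odd[OF pA pB] by (simp add: C_def D_def)
  next
    case (Suc k)
    have "q n C m = mm n C (q n C k)" using q_comm[of n C k] Suc by simp
    also have "\<dots> = mm n A (mm n B (q n C k))" by (simp add: C_def mm_assoc)
    also have "\<dots> = mm n A (mm n (q n D k) B)" by (simp add: L)
    finally have "tr n (q n C m) = tr n (mm n A (mm n (q n D k) B))" by simp
    also have "\<dots> = - tr n (mm n (mm n (q n D k) B) A)"
    proof -
      have "mpar True (mm n (q n D k) B)" using mpar_mm[OF mpar_q[OF pD] pB] by simp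
      then show ?thesis using tr_swap_odd[OF pA] by blast
    qed
    also have "mm n (mm n (q n D k) B) A = q n D m" using Suc by (simp add: D_def mm_assoc)
    finally show ?thesis .
  qed
  have "tr n (q n C m) = - tr n (q n C m)" using e1 e2 by simp
  then show ?thesis unfolding C_def[symmetric] by (rule ea_self_neg)
qed



lemma foldr_rep: "foldr ext_add (map (\<lambda>l. Rep_ea (f l)) xs) ext_zero = Rep_ea (sum_list (map f xs))"
  by (induction xs) (simp_all add: ext_add_def plus_ea.rep_eq zero_ea.rep_eq ext_zero_def)

lemma sum_list_upt_lessThan: "sum_list (map f [0..<n]) = sum f {..<n}"
  by (simp add: interv_sum_list_conv_sum_set_nat atLeast0LessThan)

lemma mat_mult_rep: "mat_mult n (\<lambda>i j. Rep_ea (X i j)) (\<lambda>i j. Rep_ea (Y i j)) = (\<lambda>i j. Rep_ea (mm n X Y i j))"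
  unfolding mat_mult_def mm_def
  by (simp add: times_ea.rep_eq[symmetric] foldr_rep sum_list_upt_lessThan)

lemma mat_pow_rep: "mat_pow n (\<lambda>i j. Rep_ea (X i j)) k = (\<lambda>i j. Rep_ea (mp n X k i j))"
proof (induction k)
  case 0 show ?case
    by (auto simp: mat_id_def fun_eq_iff one_ea.rep_eq zero_ea.rep_eq ext_zero_def)
next
  case (Suc k) then show ?case by (simp add: mat_mult_rep)
qed

lemma mat_trace_rep: "mat_trace n (\<lambda>i j. Rep_ea (X i j)) = Rep_ea (tr n X)"
  unfolding mat_trace_def tr_def by (simp add: foldr_rep sum_list_upt_lessThan)

definition Amat :: "nat \<Rightarrow> nat \<Rightarrow> gen ea" where "Amat i j = Abs_ea (a_elt i j)"
definition Bmat :: "nat \<Rightarrow> nat \<Rightarrow> gen ea" where "Bmat i j = Abs_ea (b_elt i j)"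

lemma a_in: "a_elt i j \<in> {x. \<forall>S. infinite S \<longrightarrow> x S = 0}"
  by (auto simp: a_elt_def ext_gen_def ext_smult_def ext_zero_def)
lemma b_in: "b_elt i j \<in> {x. \<forall>S. infinite S \<longrightarrow> x S = 0}"
  by (auto simp: b_elt_def ext_gen_def ext_smult_def ext_zero_def)

lemma Rep_A: "Rep_ea (Amat i j) = a_elt i j"
  unfolding Amat_def using a_in by (rule Abs_ea_inverse)
lemma Rep_B: "Rep_ea (Bmat i j) = b_elt i j"
  unfolding Bmat_def using b_in by (rule Abs_ea_inverse)

lemma pA: "mpar True Amat"
  by (auto simp: mpar_def par_def parity_def Rep_A a_elt_def ext_gen_def ext_smult_def ext_zero_def split: if_splits)
lemma pB: "mpar True Bmat"
  by (auto simp: mpar_def par_def parity_def Rep_B b_elt_def ext_gen_def ext_smult_def split: if_splits)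

lemma tA: "Amat j i = - Amat i j"
  by (auto simp: ea_eq_iff uminus_ea.rep_eq Rep_A a_elt_def ext_gen_def ext_smult_def ext_zero_def fun_eq_iff)
lemma tB: "Bmat j i = Bmat i j"
  by (simp add: ea_eq_iff Rep_B b_elt_def min.commute max.commute eq_commute)

theorem proposition5p4:
  fixes n k :: nat
  assumes "k > 0"
  shows "mat_trace n (mat_pow n (mat_mult n a_elt b_elt) k) = ext_zero"
proof -
  obtain m where k: "k = Suc m" using assms by (cases k) auto
  have a: "a_elt = (\<lambda>i j. Rep_ea (Amat i j))" by (simp add: Rep_A)
  have b: "b_elt = (\<lambda>i j. Rep_ea (Bmat i j))" by (simp add: Rep_B)
  have "mat_trace n (mat_pow n (mat_mult n a_elt b_elt) k) = Rep_ea (tr n (mp n (mm n Amat Bmat) k))"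
    unfolding a b by (simp add: mat_mult_rep mat_pow_rep mat_trace_rep)
  also have "tr n (mp n (mm n Amat Bmat) k) = 0"
    unfolding k tr_mp_q by (rule key[OF pA pB tA tB])
  finally show ?thesis by (simp add: zero_ea.rep_eq ext_zero_def)
qed

end
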